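(* Let $1\le p\le\infty$ and $a\in\mathbb{D}=\{z\in\mathbb{C}:|z|<1\}$, and let $R(p,a)$ be the least constant such that $b_{\mathbb{D},p}(T_a(z_1),T_a(z_2))\le R(p,a)\,b_{\mathbb{D},p}(z_1,z_2)$ for all $z_1,z_2\in\mathbb{D}$, where $T_a(z)=\frac{z-a}{1-\overline{a}z}$. Then $R(p,a)\ge 1+|a|$.
   Context: For $z_1,z_2\in\mathbb{D}$ and $1\le p<\infty$, $b_{\mathbb{D},p}(z_1,z_2)=\sup_{z\in\partial\mathbb{D}}\frac{|z_1-z_2|}{\sqrt[p]{|z_1-z|^p+|z-z_2|^p}}$, and $b_{\mathbb{D},\infty}(z_1,z_2)=\sup_{z\in\partial\mathbb{D}}\frac{|z_1-z_2|}{\max\{|z_1-z|,|z_2-z|\}}$. (Such a finite least constant exists, since $T_a$ is Lipschitz with respect to $b_{\mathbb{D},p}$.) *)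

theory Defs
  imports "HOL-Analysis.Analysis" "HOL-Library.Extended_Real"
begin

definition bD :: "ereal \<Rightarrow> complex \<Rightarrow> complex \<Rightarrow> real" where
  "bD p z1 z2 =
     (if p = \<infinity> then
        (SUP z\<in>sphere (0::complex) 1. cmod (z1 - z2) / max (cmod (z1 - z)) (cmod (z2 - z)))
      else
        (SUP z\<in>sphere (0::complex) 1. cmod (z1 - z2) /
            ((cmod (z1 - z) powr real_of_ereal p + cmod (z - z2) powr real_of_ereal p)
               powr (1 / real_of_ereal p))))"

definition Tmob :: "complex \<Rightarrow> complex \<Rightarrow> complex" where
  "Tmob a z = (z - a) / (1 - cnj a * z)"

definition Rconst :: "ereal \<Rightarrow> complex \<Rightarrow> real" where
  "Rconst p a = Inf {C. \<forall>z1\<in>ball 0 1. \<forall>z2\<in>ball 0 1.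
                        bD p (Tmob a z1) (Tmob a z2) \<le> C * bD p z1 z2}"

end

theory Submission
  imports Defs
begin
definition den :: "ereal \<Rightarrow> real \<Rightarrow> real \<Rightarrow> real" where
 "den p x y = (if p = \<infinity> then max x y else
    (x powr real_of_ereal p + y powr real_of_ereal p) powr (1 / real_of_ereal p))"

lemma p_cases: assumes "1 \<le> p" obtains "p = \<infinity>" | q where "p = ereal q" "1 \<le> q"
  using assms by (cases p) auto

lemma den_ge1: assumes "1 \<le> p" "0 \<le> x" "0 \<le> y" shows "x \<le> den p x y"
proof (cases rule: p_cases[OF assms(1)])
  case 1 then show ?thesis by (simp add: den_def)
next
  case (2 q)
  have "x = (x powr q) powr (1/q)" using 2 assms by (simp add: powr_powr)
  also have "\<dots> \<le> (x powr q + y powr q) powr (1/q)"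
    using 2 assms by (intro powr_mono2) auto
  finally show ?thesis using 2 by (simp add: den_def)
qed

lemma den_mono: assumes "1 \<le> p" "0 \<le> x" "0 \<le> y" "x \<le> x'" "y \<le> y'" shows "den p x y \<le> den p x' y'"
proof (cases rule: p_cases[OF assms(1)])
  case 1 then show ?thesis using assms by (auto simp add: den_def le_max_iff_disj)
next
  case (2 q)
  have "(x powr q + y powr q) powr (1/q) \<le> (x' powr q + y' powr q) powr (1/q)"
    using 2 assms by (intro powr_mono2 add_mono) auto
  then show ?thesis using 2 by (simp add: den_def)
qed

lemma den_hom: assumes "1 \<le> p" "0 \<le> x" "0 \<le> y" "0 \<le> c" shows "den p (c*x) (c*y) = c * den p x y"
proof (cases rule: p_cases[OF assms(1)])
  case 1 then show ?thesis using assms by (simp add: den_def max_mult_distrib_left)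
next
  case (2 q)
  have "(c*x) powr q + (c*y) powr q = c powr q * (x powr q + y powr q)"
    using assms by (simp add: powr_mult distrib_left)
  then have "((c*x) powr q + (c*y) powr q) powr (1/q) = (c powr q) powr (1/q) * (x powr q + y powr q) powr (1/q)"
    using assms by (simp add: powr_mult)
  also have "(c powr q) powr (1/q) = c" using 2 assms by (simp add: powr_powr)
  finally show ?thesis using 2 by (simp add: den_def)
qed

lemma bD_den: "bD p z1 z2 = (SUP z\<in>sphere 0 1. cmod (z1 - z2) / den p (cmod (z1 - z)) (cmod (z2 - z)))"
  unfolding bD_def den_def by (auto intro!: SUP_cong simp: norm_minus_commute[of _ z2])

lemma mob_diff: assumes "1 - cnj a * x \<noteq> 0" "1 - cnj a * y \<noteq> 0"
  shows "Tmob a x - Tmob a y = (1 - cnj a * a) * (x - y) / ((1 - cnj a * x) * (1 - cnj a * y))"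
  using assms unfolding Tmob_def by (simp add: field_simps)

lemma mob_norm: assumes "cmod a < 1" "1 - cnj a * x \<noteq> 0" "1 - cnj a * y \<noteq> 0"
  shows "cmod (Tmob a x - Tmob a y) = (1 - (cmod a)^2) * cmod (x - y) / (cmod (1 - cnj a * x) * cmod (1 - cnj a * y))"
proof -
  have "cnj a * a = of_real ((cmod a)^2)" by (metis complex_norm_square mult.commute)
  then have h: "1 - cnj a * a = complex_of_real (1 - (cmod a)^2)" by simp
  have "(cmod a)^2 < 1" using assms(1) by (metis abs_norm_cancel abs_square_less_1)
  then have "cmod (1 - cnj a * a) = 1 - (cmod a)^2" unfolding h norm_of_real by simp
  then show ?thesis using mob_diff[OF assms(2,3)] by (simp add: norm_mult norm_divide)
qed

lemma nb_lo: "cmod (1 - cnj a * x) \<ge> 1 - cmod a * cmod x"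
  using norm_triangle_ineq2[of 1 "cnj a * x"] by (simp add: norm_mult)
lemma nb_hi: "cmod (1 - cnj a * x) \<le> 1 + cmod a * cmod x"
  using norm_triangle_ineq4[of 1 "cnj a * x"] by (simp add: norm_mult)

lemma mob_sphere: assumes "cmod a < 1" "cmod w = 1"
  shows "\<exists>z\<in>sphere 0 1. Tmob a z = w"
proof -
  have nz: "1 + cnj a * w \<noteq> 0"
  proof
    assume "1 + cnj a * w = 0"
    then have "cmod (cnj a * w) = 1" by (metis add_eq_0_iff norm_minus_cancel norm_one)
    then show False using assms by (simp add: norm_mult)
  qed
  define z where "z = (w + a) / (1 + cnj a * w)"
  have "cmod (w + a) = cmod (1 + cnj a * w)"
  proof -
    have "cmod (1 + cnj a * w) = cmod (cnj w * (1 + cnj a * w))" using assms by (simp add: norm_mult)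
    also have "cnj w * (1 + cnj a * w) = cnj w + cnj a * (cnj w * w)" by (simp add: algebra_simps)
    also have "cnj w * w = 1" using assms by (metis complex_norm_square mult.commute of_real_1 power_one)
    finally have "cmod (1 + cnj a * w) = cmod (cnj (w + a))" by simp
    then show ?thesis by (simp only: complex_mod_cnj)
  qed
  then have cz: "cmod z = 1" using nz by (simp add: z_def norm_divide)
  have na: "1 - cnj a * a \<noteq> 0"
  proof
    assume "1 - cnj a * a = 0"
    then have "cmod (cnj a * a) = 1" by simp
    then show False using assms by (simp add: norm_mult abs_square_eq_1 power2_eq_square[symmetric])
  qed
  have e1: "z - a = w * (1 - cnj a * a) / (1 + cnj a * w)"
    using nz unfolding z_def by (simp add: field_simps)
  have e2: "1 - cnj a * z = (1 - cnj a * a) / (1 + cnj a * w)"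
    using nz unfolding z_def by (simp add: field_simps)
  have tz: "Tmob a z = w"
    unfolding Tmob_def e1 e2 using nz na by simp
  show ?thesis using cz tz by auto
qed

lemma den_pos: assumes "1 \<le> p" "0 < x" "0 \<le> y" shows "0 < den p x y"
  using den_ge1[OF assms(1) _ assms(3), of x] assms(2) by simp

lemma dist_sph: assumes "cmod z = 1" shows "1 - cmod w \<le> cmod (w - z)"
  using norm_triangle_ineq2[of z w] assms by (simp add: norm_minus_commute)

lemma g_bdd: assumes "1 \<le> p" "cmod w1 < 1"
  shows "bdd_above ((\<lambda>z. cmod (w1 - w2) / den p (cmod (w1 - z)) (cmod (w2 - z))) ` sphere 0 1)"
proof (rule bdd_aboveI2)
  fix z :: complex assume "z \<in> sphere 0 1"
  then have z: "cmod z = 1" by simp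
  have "1 - cmod w1 \<le> cmod (w1 - z)" using dist_sph[OF z] .
  also have "\<dots> \<le> den p (cmod (w1 - z)) (cmod (w2 - z))" by (rule den_ge1[OF assms(1)]) auto
  finally have "1 - cmod w1 \<le> den p (cmod (w1 - z)) (cmod (w2 - z))" .
  then show "cmod (w1 - w2) / den p (cmod (w1 - z)) (cmod (w2 - z)) \<le> cmod (w1 - w2) / (1 - cmod w1)"
    using assms by (intro divide_left_mono) auto
qed

lemma mob_ball: assumes "cmod a < 1" "cmod z < 1" shows "cmod (Tmob a z) < 1"
proof -
  have e: "cmod (1 - cnj a * z)^2 - cmod (z - a)^2 = (1 - cmod a^2) * (1 - cmod z^2)"
    unfolding cmod_power2 by (simp add: power2_eq_square algebra_simps)
  have "cmod a ^2 < 1" "cmod z ^2 < 1" using assms by (metis abs_norm_cancel abs_square_less_1)+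
  then have "cmod (z - a)^2 < cmod (1 - cnj a * z)^2" using e
    by (smt (verit) mult_pos_pos)
  then have l: "cmod (z - a) < cmod (1 - cnj a * z)" by (rule power2_less_imp_less) simp
  moreover have "0 < cmod (1 - cnj a * z)" using l by (smt (verit) norm_ge_zero)
  ultimately show ?thesis unfolding Tmob_def norm_divide by simp
qed

lemma lip: assumes p: "1 \<le> p" and a: "cmod a < 1" and z1: "cmod z1 < 1" and z2: "cmod z2 < 1"
  shows "bD p (Tmob a z1) (Tmob a z2) \<le> ((1 + cmod a)^2 / (1 - cmod a)^2) * bD p z1 z2"
proof -
  define r where "r = cmod a"
  define s where "s = 1 - r^2"
  define K where "K = (1 + r)^2 / (1 - r)^2"
  have r: "0 \<le> r" "r < 1" using a by (auto simp: r_def)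
  have s: "0 < s" unfolding s_def using r by (simp add: power_less_one_iff abs_square_less_1)
  have K: "0 \<le> K" unfolding K_def by simp
  let ?g = "\<lambda>z. cmod (z1 - z2) / den p (cmod (z1 - z)) (cmod (z2 - z))"
  have A_lo: "1 - r \<le> cmod (1 - cnj a * x)" if "cmod x \<le> 1" for x
    using nb_lo[of a x] that r unfolding r_def by (smt (verit) mult_left_le)
  have A_hi: "cmod (1 - cnj a * x) \<le> 1 + r" if "cmod x \<le> 1" for x
    using nb_hi[of a x] that r unfolding r_def by (smt (verit) mult_left_le)
  have A_nz: "1 - cnj a * x \<noteq> 0" if "cmod x \<le> 1" for x
    using A_lo[OF that] r by auto
  have key: "cmod (Tmob a z1 - Tmob a z2) / den p (cmod (Tmob a z1 - Tmob a z)) (cmod (Tmob a z2 - Tmob a z))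
      \<le> K * ?g z" if z: "cmod z = 1" for z
  proof -
    define A where "A = cmod (1 - cnj a * z)"
    define A1 where "A1 = cmod (1 - cnj a * z1)"
    define A2 where "A2 = cmod (1 - cnj a * z2)"
    have hA: "1 - r \<le> A" "A \<le> 1 + r" using A_lo A_hi z unfolding A_def by auto
    have hA1: "1 - r \<le> A1" "A1 \<le> 1 + r" using A_lo A_hi z1 unfolding A1_def by auto
    have hA2: "1 - r \<le> A2" "A2 \<le> 1 + r" using A_lo A_hi z2 unfolding A2_def by auto
    have nz: "1 - cnj a * z \<noteq> 0" "1 - cnj a * z1 \<noteq> 0" "1 - cnj a * z2 \<noteq> 0"
      using A_nz z z1 z2 by auto
    have T1: "cmod (Tmob a z1 - Tmob a z) = s * cmod (z1 - z) / (A1 * A)"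
      using mob_norm[OF a nz(2) nz(1)] unfolding s_def r_def A_def A1_def .
    have T2: "cmod (Tmob a z2 - Tmob a z) = s * cmod (z2 - z) / (A2 * A)"
      using mob_norm[OF a nz(3) nz(1)] unfolding s_def r_def A_def A2_def .
    have T12: "cmod (Tmob a z1 - Tmob a z2) = s * cmod (z1 - z2) / (A1 * A2)"
      using mob_norm[OF a nz(2) nz(3)] unfolding s_def r_def A1_def A2_def .
    define c where "c = s / ((1 + r) * A)"
    have c: "0 < c" unfolding c_def using s r hA by auto
    have "A1 * A > 0" using hA hA1 r by (smt (verit) mult_pos_pos)
    then have "s/((1+r)*A) \<le> s/(A1*A)" using s hA hA1 r by (intro divide_left_mono mult_right_mono) auto
    then have c1: "c * cmod (z1 - z) \<le> cmod (Tmob a z1 - Tmob a z)"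
      unfolding T1 c_def by (metis mult_right_mono norm_ge_zero times_divide_eq_left)
    have "A2 * A > 0" using hA hA2 r by (smt (verit) mult_pos_pos)
    then have "s/((1+r)*A) \<le> s/(A2*A)" using s hA hA2 r by (intro divide_left_mono mult_right_mono) auto
    then have c2: "c * cmod (z2 - z) \<le> cmod (Tmob a z2 - Tmob a z)"
      unfolding T2 c_def by (metis mult_right_mono norm_ge_zero times_divide_eq_left)
    define d0 where "d0 = den p (cmod (z1 - z)) (cmod (z2 - z))"
    have d0: "0 < d0" unfolding d0_def
      using den_pos[OF p, of "cmod (z1 - z)" "cmod (z2 - z)"] dist_sph[OF z, of z1] z1 z by fastforce
    have "c * d0 = den p (c * cmod (z1 - z)) (c * cmod (z2 - z))"
      unfolding d0_def using den_hom[OF p, of "cmod (z1 - z)" "cmod (z2 - z)" c] c by simp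
    also have "\<dots> \<le> den p (cmod (Tmob a z1 - Tmob a z)) (cmod (Tmob a z2 - Tmob a z))"
      using c c1 c2 by (intro den_mono[OF p]) auto
    finally have dT: "c * d0 \<le> den p (cmod (Tmob a z1 - Tmob a z)) (cmod (Tmob a z2 - Tmob a z))" .
    have q1: "(1+r)*A \<le> (1+r)^2" using hA r by (simp add: power2_eq_square mult_left_mono)
    have q2: "0 < (1+r)*A" using hA r by simp
    have cc: "s / (1 + r)^2 \<le> c" unfolding c_def using s q1 q2 r
      by (intro divide_left_mono) (auto intro!: mult_pos_pos)
    have lo: "s / (1 + r)^2 * d0 \<le> den p (cmod (Tmob a z1 - Tmob a z)) (cmod (Tmob a z2 - Tmob a z))"
      using dT cc d0 by (smt (verit) mult_right_mono)
    have hi: "cmod (Tmob a z1 - Tmob a z2) \<le> s * cmod (z1 - z2) / (1 - r)^2"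
      unfolding T12 using s r hA1 hA2
      by (intro divide_left_mono) (auto simp: power2_eq_square intro!: mult_mono)
    have "cmod (Tmob a z1 - Tmob a z2) / den p (cmod (Tmob a z1 - Tmob a z)) (cmod (Tmob a z2 - Tmob a z))
        \<le> (s * cmod (z1 - z2) / (1 - r)^2) / (s / (1 + r)^2 * d0)"
      using hi lo s r d0 by (intro frac_le) auto
    also have "\<dots> = K * ?g z" unfolding K_def d0_def[symmetric] using s r d0 by (simp add: field_simps)
    finally show ?thesis .
  qed
  have "bD p (Tmob a z1) (Tmob a z2) \<le> K * bD p z1 z2"
    unfolding bD_den[of p "Tmob a z1"]
  proof (rule cSUP_least)
    show "sphere (0::complex) 1 \<noteq> {}" by (simp add: sphere_eq_empty)
  next
    fix w :: complex assume "w \<in> sphere 0 1"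
    then have "cmod w = 1" by simp
    then obtain z where z: "z \<in> sphere 0 1" "Tmob a z = w" using mob_sphere[OF a, of w] by blast
    have "?g z \<le> bD p z1 z2" unfolding bD_den[of p z1]
      by (rule cSUP_upper[OF z(1) g_bdd[OF p z1]])
    then have "K * ?g z \<le> K * bD p z1 z2" using K by (rule mult_left_mono)
    with key[of z] z show "cmod (Tmob a z1 - Tmob a z2) / den p (cmod (Tmob a z1 - w)) (cmod (Tmob a z2 - w)) \<le> K * bD p z1 z2"
      by auto
  qed
  then show ?thesis unfolding K_def r_def .
qed

lemma lower_t: assumes p: "1 \<le> p" and a: "cmod a < 1" and t: "0 < t" "t < 1"
  and C: "\<forall>z1\<in>ball 0 1. \<forall>z2\<in>ball 0 1. bD p (Tmob a z1) (Tmob a z2) \<le> C * bD p z1 z2"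
  shows "(1 + cmod a) * (1 - t) * (1 - cmod a * t) / ((1 + cmod a * t)^2 * (1 + t)) \<le> C"
proof -
  define r where "r = cmod a"
  define s where "s = 1 - r^2"
  have r: "0 \<le> r" "r < 1" using a by (auto simp: r_def)
  have s: "0 < s" unfolding s_def using r by (simp add: power_less_one_iff abs_square_less_1)
  define u where "u = (if a = 0 then 1 else a / complex_of_real r)"
  have u1: "cmod u = 1" unfolding u_def r_def by (auto simp: norm_divide)
  have au: "a = complex_of_real r * u" unfolding u_def r_def by auto
  have uu: "cnj u * u = 1" using u1 by (metis complex_norm_square mult.commute of_real_1 power_one)
  have au2: "cnj a * u = complex_of_real r" unfolding au using uu by (simp add: mult.assoc)
  have e: "1 + cnj a * u = complex_of_real (1 + r)" by (simp add: au2)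
  have e0: "1 + cnj a * u \<noteq> 0" unfolding e using r by (simp only: of_real_eq_0_iff)
  have Tu: "Tmob a (-u) = -u"
  proof -
    note e0
    moreover have "- u - a = - u * (1 + cnj a * u)" unfolding e by (simp add: au algebra_simps)
    ultimately show ?thesis unfolding Tmob_def by simp
  qed
  define z1 where "z1 = complex_of_real t"
  define z2 where "z2 = - complex_of_real t"
  have nz1: "cmod z1 = t" "cmod z2 = t" using t by (auto simp: z1_def z2_def)
  have d12: "cmod (z1 - z2) = 2 * t" using t by (simp add: z1_def z2_def)
  define c where "c = den p 1 1"
  have c: "1 \<le> c" unfolding c_def using den_ge1[OF p, of 1 1] by simp
  define U where "U = 2 * t / ((1 - t) * c)"
  have U: "0 < U" unfolding U_def using t c by simp
  have Up: "bD p z1 z2 \<le> U" unfolding bD_den[of p z1]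
  proof (rule cSUP_least)
    show "sphere (0::complex) 1 \<noteq> {}" by (simp add: sphere_eq_empty)
  next
    fix z :: complex assume "z \<in> sphere 0 1"
    then have z: "cmod z = 1" by simp
    have "(1 - t) * c = den p ((1 - t) * 1) ((1 - t) * 1)" unfolding c_def
      using den_hom[OF p, of 1 1 "1 - t"] t by simp
    also have "\<dots> \<le> den p (cmod (z1 - z)) (cmod (z2 - z))"
      using dist_sph[OF z, of z1] dist_sph[OF z, of z2] nz1 t by (intro den_mono[OF p]) auto
    finally have dd: "(1 - t) * c \<le> den p (cmod (z1 - z)) (cmod (z2 - z))" .
    have pos: "0 < (1 - t) * c" using t c by simp
    then have "0 < den p (cmod (z1 - z)) (cmod (z2 - z)) * ((1 - t) * c)" using dd
      by (smt (verit) mult_pos_pos)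
    with dd show "cmod (z1 - z2) / den p (cmod (z1 - z)) (cmod (z2 - z)) \<le> U"
      unfolding U_def d12 using t by (intro divide_left_mono) auto
  qed
  have A_lo: "1 - r * t \<le> cmod (1 - cnj a * x)" if "cmod x = t" for x
    using nb_lo[of a x] that unfolding r_def by simp
  have A_hi: "cmod (1 - cnj a * x) \<le> 1 + r * t" if "cmod x = t" for x
    using nb_hi[of a x] that unfolding r_def by simp
  have rt: "r * t < 1" using mult_left_le[of t r] r t by linarith
  have rt0: "0 \<le> r * t" using r t by simp
  define A1 where "A1 = cmod (1 - cnj a * z1)"
  define A2 where "A2 = cmod (1 - cnj a * z2)"
  have hA1: "1 - r * t \<le> A1" "A1 \<le> 1 + r * t" using A_lo A_hi nz1 unfolding A1_def by auto
  have hA2: "1 - r * t \<le> A2" "A2 \<le> 1 + r * t" using A_lo A_hi nz1 unfolding A2_def by auto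
  have nz: "1 - cnj a * z1 \<noteq> 0" "1 - cnj a * z2 \<noteq> 0" "1 - cnj a * (-u) \<noteq> 0"
    using hA1 hA2 rt r e0 unfolding A1_def A2_def by auto
  have Au: "cmod (1 - cnj a * (-u)) = 1 + r" unfolding mult_minus_right au2 using r
    by (metis abs_of_nonneg add_nonneg_nonneg diff_minus_eq_add norm_of_real of_real_1 of_real_add zero_le_one)
  define m where "m = s * (1 + t) / ((1 - r * t) * (1 + r))"
  have m: "0 < m" unfolding m_def using s t r rt by simp
  have Tm: "cmod (Tmob a x - - u) \<le> m" if "cmod x = t" "1 - cnj a * x \<noteq> 0" for x
  proof -
    have "cmod (Tmob a x - - u) = s * cmod (x + u) / (cmod (1 - cnj a * x) * (1 + r))"
      using mob_norm[OF a that(2) nz(3)] unfolding Tu Au s_def r_def by simp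
    also have "\<dots> \<le> s * (1 + t) / ((1 - r * t) * (1 + r))"
    proof (rule frac_le)
      show "s * cmod (x + u) \<le> s * (1 + t)" using s norm_triangle_ineq[of x u] that u1 by simp
      show "0 < (1 - r * t) * (1 + r)" using rt r by simp
      show "(1 - r * t) * (1 + r) \<le> cmod (1 - cnj a * x) * (1 + r)"
        using A_lo[OF that(1)] r by (intro mult_right_mono) auto
    qed (use s t in auto)
    finally show ?thesis unfolding m_def .
  qed
  have Dm: "den p (cmod (Tmob a z1 - - u)) (cmod (Tmob a z2 - - u)) \<le> m * c"
  proof -
    have "den p (cmod (Tmob a z1 - - u)) (cmod (Tmob a z2 - - u)) \<le> den p (m * 1) (m * 1)"
      using Tm[OF nz1(1) nz(1)] Tm[OF nz1(2) nz(2)] by (intro den_mono[OF p]) auto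
    also have "\<dots> = m * c" unfolding c_def using den_hom[OF p, of 1 1 m] m by simp
    finally show ?thesis .
  qed
  have T12: "cmod (Tmob a z1 - Tmob a z2) = s * (2 * t) / (A1 * A2)"
    using mob_norm[OF a nz(1) nz(2)] unfolding s_def r_def A1_def A2_def d12 .
  have T12lo: "s * (2 * t) / (1 + r * t)^2 \<le> cmod (Tmob a z1 - Tmob a z2)"
    unfolding T12 using s t hA1 hA2 rt
    by (intro divide_left_mono) (auto simp: power2_eq_square intro!: mult_mono mult_pos_pos)
  define L where "L = (s * (2 * t) / (1 + r * t)^2) / (m * c)"
  have L: "0 < L" unfolding L_def using s t m c rt0 by (auto intro!: divide_pos_pos)
  have "L \<le> cmod (Tmob a z1 - Tmob a z2) / den p (cmod (Tmob a z1 - - u)) (cmod (Tmob a z2 - - u))"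
    unfolding L_def
  proof (rule frac_le)
    show "0 < den p (cmod (Tmob a z1 - - u)) (cmod (Tmob a z2 - - u))"
    proof -
      have "cmod (Tmob a z1) < 1" using mob_ball[OF a, of z1] nz1 t by simp
      then have "0 < cmod (Tmob a z1 - - u)" using dist_sph[of "-u" "Tmob a z1"] u1 by force
      then show ?thesis by (rule den_pos[OF p]) simp
    qed
  qed (use T12lo Dm s t rt0 in auto)
  also have "\<dots> \<le> bD p (Tmob a z1) (Tmob a z2)" unfolding bD_den[of p "Tmob a z1"]
  proof (rule cSUP_upper)
    show "- u \<in> sphere 0 1" using u1 by simp
    show "bdd_above ((\<lambda>z. cmod (Tmob a z1 - Tmob a z2) / den p (cmod (Tmob a z1 - z)) (cmod (Tmob a z2 - z))) ` sphere 0 1)"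
      using g_bdd[OF p mob_ball[OF a, of z1]] nz1 t by simp
  qed
  also have "\<dots> \<le> C * bD p z1 z2" using C nz1 t by auto
  finally have LC: "L \<le> C * bD p z1 z2" .
  have b0: "0 \<le> bD p z1 z2"
  proof -
    have "cmod (z1 - z2) / den p (cmod (z1 - 1)) (cmod (z2 - 1)) \<le> bD p z1 z2" unfolding bD_den[of p z1]
      using g_bdd[OF p, of z1 z2] nz1 t by (intro cSUP_upper) auto
    moreover have "0 \<le> den p (cmod (z1 - 1)) (cmod (z2 - 1))"
      using den_ge1[OF p norm_ge_zero norm_ge_zero, of "z1 - 1" "z2 - 1"] norm_ge_zero[of "z1 - 1"] by linarith
    ultimately show ?thesis by (smt (verit) divide_nonneg_nonneg norm_ge_zero)
  qed
  have C0: "0 < C" using LC L b0 by (smt (verit) mult_nonpos_nonneg)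
  then have "C * bD p z1 z2 \<le> C * U" using Up by simp
  with LC have "L \<le> C * U" by simp
  then have "L / U \<le> C" using U by (simp add: pos_divide_le_eq)
  moreover have "L / U = (1 + r) * (1 - t) * (1 - r * t) / ((1 + r * t)^2 * (1 + t))"
  proof -
    have nz: "1 - r * t \<noteq> 0" "1 + r \<noteq> 0" "1 + t \<noteq> 0" "1 - t \<noteq> 0" "c \<noteq> 0" "t \<noteq> 0"
      "s \<noteq> 0" using t c r rt s by auto
    have "1 + r * t \<noteq> 0" using rt0 by linarith
    note nz = nz this
    show ?thesis unfolding L_def U_def m_def using nz by (simp add: divide_simps)
  qed
  ultimately show ?thesis unfolding r_def by simp
qed

theorem theorem4p4:
  fixes p :: ereal and a :: complex
  assumes "1 \<le> p" and "a \<in> ball 0 1"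
  shows "Rconst p a \<ge> 1 + cmod a"
proof -
  have a: "cmod a < 1" using assms(2) by simp
  define S where "S = {C. \<forall>z1\<in>ball 0 1. \<forall>z2\<in>ball 0 1.
                        bD p (Tmob a z1) (Tmob a z2) \<le> C * bD p z1 z2}"
  have "(1 + cmod a)^2 / (1 - cmod a)^2 \<in> S" unfolding S_def
    using lip[OF assms(1) a] by auto
  then have Sne: "S \<noteq> {}" by blast
  have lb: "1 + cmod a \<le> C" if "C \<in> S" for C
  proof -
    define F where "F = (\<lambda>t. (1 + cmod a) * (1 - t) * (1 - cmod a * t) / ((1 + cmod a * t)^2 * (1 + t)))"
    have CF: "F t \<le> C" if "0 < t" "t < 1" for t
      unfolding F_def using lower_t[OF assms(1) a that] \<open>C \<in> S\<close> unfolding S_def by blast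
    have "isCont F 0" unfolding F_def by (intro continuous_intros) auto
    moreover have "(\<lambda>n. inverse (real (Suc n)) / 2) \<longlonglongrightarrow> 0"
      using tendsto_divide[OF LIMSEQ_inverse_real_of_nat tendsto_const, of 2] by simp
    ultimately have "(\<lambda>n. F (inverse (real (Suc n)) / 2)) \<longlonglongrightarrow> F 0"
      by (rule isCont_tendsto_compose)
    moreover have "\<exists>N. \<forall>n\<ge>N. F (inverse (real (Suc n)) / 2) \<le> C"
    proof (intro exI allI impI)
      fix n :: nat
      have "inverse (real (Suc n)) \<le> 1" by (simp add: inverse_le_1_iff)
      then show "F (inverse (real (Suc n)) / 2) \<le> C" by (intro CF) auto
    qed
    ultimately have "F 0 \<le> C" by (rule LIMSEQ_le_const2)
    then show ?thesis unfolding F_def by simp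
  qed
  show ?thesis unfolding Rconst_def S_def[symmetric] using Sne lb by (rule cInf_greatest)
qed
end
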